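(* Let $S$ be a numerical semigroup minimally generated by $n_1<\cdots<n_e$, with conductor $c$, and let $m\ge 2c-1$. Let $M$ and $N$ be $(S,m,r)$-amenable sets with shadows $L_M$ and $L_N$ respectively. If $L_M\subseteq L_N$, then $\sharp\mathrm D(M)\le\sharp\mathrm D(N)$.
   Context: A numerical semigroup is a submonoid of $\mathbb N$ with finite complement; its conductor $c$ is the least element of $S$ such that $c+n\in S$ for all $n\in\mathbb N$. For $x\in S$, $\mathrm D(x)=\{\alpha\in S\mid x-\alpha\in S\}$ and for $A\subseteq S$, $\mathrm D(A)=\bigcup_{x\in A}\mathrm D(x)$. A set $M=\{m_1<\cdots<m_r\}\subseteq S$ with $2c-1\le m=m_1$ is $(S,m,r)$-amenable if $\mathrm D(m_i)\cap[m,\infty)\subseteq M$ for all $i$. The ground is $\{m,\ldots,m+n_e-1\}$ and the shadow of an amenable set $M$ is $M\cap\{m,\ldots,m+n_e-1\}$. *)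

theory Defs
  imports Main
begin

definition numerical_semigroup :: "nat set \<Rightarrow> bool" where
  "numerical_semigroup S \<longleftrightarrow> 0 \<in> S \<and> (\<forall>x\<in>S. \<forall>y\<in>S. x + y \<in> S) \<and> finite (UNIV - S)"

definition minimal_generators :: "nat set \<Rightarrow> nat set" where
  "minimal_generators S = {x \<in> S. x \<noteq> 0 \<and>
      \<not> (\<exists>a\<in>S. \<exists>b\<in>S. a \<noteq> 0 \<and> b \<noteq> 0 \<and> a + b = x)}"

definition conductor :: "nat set \<Rightarrow> nat" where
  "conductor S = (LEAST c. c \<in> S \<and> (\<forall>n. c + n \<in> S))"

definition Dx :: "nat set \<Rightarrow> nat \<Rightarrow> nat set" where
  "Dx S x = {a \<in> S. a \<le> x \<and> x - a \<in> S}"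

definition DA :: "nat set \<Rightarrow> nat set \<Rightarrow> nat set" where
  "DA S A = (\<Union>x\<in>A. Dx S x)"

definition amenable :: "nat set \<Rightarrow> nat \<Rightarrow> nat \<Rightarrow> nat set \<Rightarrow> bool" where
  "amenable S m r M \<longleftrightarrow> finite M \<and> M \<noteq> {} \<and> card M = r \<and> M \<subseteq> S \<and>
     Min M = m \<and> 2 * conductor S - 1 \<le> m \<and>
     (\<forall>x\<in>M. Dx S x \<inter> {m..} \<subseteq> M)"

definition shadow :: "nat set \<Rightarrow> nat \<Rightarrow> nat set \<Rightarrow> nat set" where
  "shadow S m M = M \<inter> {m..<m + Max (minimal_generators S)}"

end

theory Submission
  imports Defs
begin

lemma gen_exists:
  assumes ns: "numerical_semigroup S"
  shows "b \<in> S \<Longrightarrow> b \<noteq> 0 \<Longrightarrow> \<exists>g\<in>minimal_generators S. g \<le> b \<and> b - g \<in> S"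
proof (induction b rule: less_induct)
  case (less b)
  show ?case
  proof (cases "b \<in> minimal_generators S")
    case True
    then show ?thesis using ns by (auto simp: numerical_semigroup_def)
  next
    case False
    then obtain a1 a2 where a: "a1 \<in> S" "a2 \<in> S" "a1 \<noteq> 0" "a2 \<noteq> 0" "a1 + a2 = b"
      using less.prems unfolding minimal_generators_def by auto
    then obtain g where g: "g \<in> minimal_generators S" "g \<le> a1" "a1 - g \<in> S"
      using less.IH[of a1] by auto
    have "b - g = (a1 - g) + a2" using a g by auto
    moreover have "(a1 - g) + a2 \<in> S" using ns g(3) a(2) unfolding numerical_semigroup_def by blast
    ultimately have "b - g \<in> S" by simp
    moreover have "g \<le> b" using g a by simp
    ultimately show ?thesis using g(1) by blast
  qed
qed

lemma cond_in:
  assumes ns: "numerical_semigroup S" and "conductor S \<le> x"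
  shows "x \<in> S"
proof -
  let ?P = "\<lambda>c. c \<in> S \<and> (\<forall>n. c + n \<in> S)"
  have fin: "finite (UNIV - S)" using ns by (simp add: numerical_semigroup_def)
  obtain k where k: "\<forall>y\<in>UNIV - S. y < k"
    using fin by (metis finite_nat_set_iff_bounded)
  have kk: "\<forall>y. k \<le> y \<longrightarrow> y \<in> S" using k by (meson DiffI UNIV_I leD)
  have "?P k" using kk by simp
  then have "?P (conductor S)" unfolding conductor_def by (rule LeastI)
  then show ?thesis using assms(2) by (metis le_add_diff_inverse)
qed

lemma gens_sub: "minimal_generators S \<subseteq> S"
  by (auto simp: minimal_generators_def)

lemma gens_finite:
  assumes ns: "numerical_semigroup S"
  shows "finite (minimal_generators S)"
proof -
  have fin: "finite (UNIV - S)" using ns by (simp add: numerical_semigroup_def)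
  obtain s where s: "s \<in> S" "s \<noteq> 0"
  proof -
    have "\<not> {1::nat..} \<subseteq> (UNIV - S)" using fin finite_subset infinite_Ici by blast
    then obtain y where "y \<in> {1::nat..}" "y \<in> S" by blast
    then show ?thesis using that by simp
  qed
  have "minimal_generators S \<subseteq> {..conductor S + s}"
  proof
    fix x assume x: "x \<in> minimal_generators S"
    show "x \<in> {..conductor S + s}"
    proof (rule ccontr)
      assume "x \<notin> {..conductor S + s}"
      then have xs: "x - s \<in> S" "x - s \<noteq> 0" "s + (x - s) = x" using cond_in[OF ns, of "x - s"] by auto
      have "\<exists>a\<in>S. \<exists>b\<in>S. a \<noteq> 0 \<and> b \<noteq> 0 \<and> a + b = x"
        using xs s by blast
      then show False using x unfolding minimal_generators_def by blast
    qed
  qed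
  then show ?thesis by (rule finite_subset) simp
qed

lemma key:
  assumes ns: "numerical_semigroup S" and am: "amenable S m r M"
  shows "x \<in> M \<Longrightarrow> a \<in> Dx S x \<Longrightarrow> a < m \<Longrightarrow> a \<in> DA S (shadow S m M)"
proof (induction x rule: less_induct)
  case (less x)
  let ?ne = "Max (minimal_generators S)"
  have finM: "finite M" and minM: "Min M = m" and cm: "2 * conductor S - 1 \<le> m"
    and cl: "\<forall>x\<in>M. Dx S x \<inter> {m..} \<subseteq> M" and MS: "M \<subseteq> S"
    using am by (auto simp: amenable_def)
  have xm: "m \<le> x" using less.prems(1) finM minM by auto
  show ?case
  proof (cases "x < m + ?ne")
    case True
    then have "x \<in> shadow S m M" using xm less.prems(1) by (auto simp: shadow_def)
    then show ?thesis using less.prems(2) by (auto simp: DA_def)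
  next
    case False
    have a: "a \<in> S" "a \<le> x" "x - a \<in> S" using less.prems(2) by (auto simp: Dx_def)
    have "x - a \<noteq> 0" using a less.prems(3) xm by auto
    then obtain g where g: "g \<in> minimal_generators S" "g \<le> x - a" "x - a - g \<in> S"
      using gen_exists[OF ns a(3)] by auto
    have gne: "g \<le> ?ne" using g(1) gens_finite[OF ns] by auto
    have g0: "g \<noteq> 0" "g \<in> S" using g(1) by (auto simp: minimal_generators_def)
    have x'm: "m \<le> x - g" using False gne by auto
    have "conductor S \<le> m" using cm by auto
    then have x'S: "x - g \<in> S" using cond_in[OF ns] x'm by auto
    have "x - g \<in> Dx S x" using x'S g0 g(2) a by (auto simp: Dx_def)
    then have x'M: "x - g \<in> M" using cl less.prems(1) x'm by auto
    have e: "x - g - a = x - a - g" by simp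
    have "a \<le> x - g" using a g by simp
    then have "a \<in> Dx S (x - g)" using a g e by (simp add: Dx_def)
    moreover have "x - g < x" using g0 xm g(2) a by simp
    ultimately show ?thesis using less.IH[OF _ x'M] less.prems(3) by blast
  qed
qed

lemma card_split:
  assumes ns: "numerical_semigroup S" and am: "amenable S m r M"
  shows "card (DA S M) = r + card (DA S M \<inter> {..<m})"
    and "DA S M \<inter> {..<m} \<subseteq> DA S (shadow S m M)"
proof -
  have finM: "finite M" and minM: "Min M = m" and cr: "card M = r"
    and cl: "\<forall>x\<in>M. Dx S x \<inter> {m..} \<subseteq> M" and MS: "M \<subseteq> S"
    using am by (auto simp: amenable_def)
  have "M \<subseteq> DA S M"
  proof
    fix x assume "x \<in> M"
    then have "x \<in> Dx S x" using MS ns by (auto simp: Dx_def numerical_semigroup_def)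
    then show "x \<in> DA S M" using \<open>x \<in> M\<close> by (auto simp: DA_def)
  qed
  moreover have "DA S M \<inter> {m..} \<subseteq> M" using cl by (auto simp: DA_def)
  moreover have "M \<subseteq> {m..}" using finM minM by auto
  ultimately have eq: "DA S M = M \<union> (DA S M \<inter> {..<m})" by auto
  have "DA S M \<subseteq> {..Max M}" using finM by (auto simp: DA_def Dx_def) (meson Max_ge le_trans)
  then have fD: "finite (DA S M)" by (rule finite_subset) simp
  have "card (DA S M) = card M + card (DA S M \<inter> {..<m})"
    apply (subst eq, rule card_Un_disjoint)
    using finM fD \<open>M \<subseteq> {m..}\<close> by auto
  then show "card (DA S M) = r + card (DA S M \<inter> {..<m})" using cr by simp
  show "DA S M \<inter> {..<m} \<subseteq> DA S (shadow S m M)"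
    using key[OF ns am] by (auto simp: DA_def)
qed

theorem corollary3p11:
  fixes S M N :: "nat set" and m r :: nat
  assumes "numerical_semigroup S"
    and "2 * conductor S - 1 \<le> m"
    and "amenable S m r M" and "amenable S m r N"
    and "shadow S m M \<subseteq> shadow S m N"
  shows "card (DA S M) \<le> card (DA S N)"
proof -
  have "DA S (shadow S m N) \<subseteq> DA S N" by (auto simp: DA_def shadow_def)
  moreover have "DA S (shadow S m M) \<subseteq> DA S (shadow S m N)" using assms(5) by (auto simp: DA_def)
  ultimately have sub: "DA S M \<inter> {..<m} \<subseteq> DA S N \<inter> {..<m}"
    using card_split(2)[OF assms(1,3)] by auto
  have finN: "finite (DA S N \<inter> {..<m})" by simp
  show ?thesis using card_split(1)[OF assms(1,3)] card_split(1)[OF assms(1,4)]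
    card_mono[OF finN sub] by simp
qed

end
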